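(* Let $N_{\mathsf s}\ge1$ be a fixed integer, $\beta\in(0,\infty)$, and for each integer $N_{\mathsf h}\ge1$ set $N=N_{\mathsf s}N_{\mathsf h}$ and let $K=K_N$ be a positive integer with $K_N/N\to\beta$. Let $\boldsymbol{S}\in\mathbb{R}^{N\times K}$ have independent columns, each an $(N_{\mathsf s},N_{\mathsf h})$-sequence, and let $\lambda_1,\dots,\lambda_N$ be the eigenvalues of $\boldsymbol{S}\boldsymbol{S}^{\mathsf T}$. Then $\frac1N\sum_{i=1}^N\lambda_i=K/N$ surely, and, as $N\to\infty$, \[ \frac1N\sum_{i=1}^N\lambda_i^2\ \xrightarrow{p}\ \beta(1+\beta). \] Consequently, with $\eta_{\min}:=\beta\ln 2/\mathbb{E}[\lambda]$ and $\mathcal S_0:=2(\mathbb{E}[\lambda])^2/\mathbb{E}[\lambda^2]$ computed from these empirical moments, $\eta_{\min}=\ln2$ and $\mathcal S_0\to 2\beta/(1+\beta)$ in probability.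
   Context: An $(N_{\mathsf s},N_{\mathsf h})$-sequence is a random vector $\boldsymbol{s}\in\mathbb{R}^N$, $N=N_{\mathsf s}N_{\mathsf h}$, such that for each $m=1,\dots,N_{\mathsf s}$ the block $(s_{1+(m-1)N_{\mathsf h}},\dots,s_{mN_{\mathsf h}})$ has exactly one nonzero entry, whose position within the block is uniform and whose value is $\pm1/\sqrt{N_{\mathsf s}}$ with equal probability, all choices independent. $\xrightarrow{p}$ denotes convergence in probability. $\eta_{\min}$ is the minimum energy per bit over noise level and $\mathcal S_0$ the wideband slope of optimum-decoding spectral efficiency. *)

theory Defs
  imports "HOL-Probability.Probability" "Jordan_Normal_Form.Char_Poly"
begin

text \<open>Distribution of one (Ns,Nh)-sequence in R^N, N = Ns*Nh (coordinates indexed 0..N-1;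
  entries outside this range are 0).  For every block m < Ns an independent uniform choice of a
  position p < Nh inside the block and a uniform sign b; the block's only nonzero entry,
  at index m*Nh + p, is (+/-1)/sqrt Ns.\<close>
definition seq_pmf :: "nat \<Rightarrow> nat \<Rightarrow> (nat \<Rightarrow> real) pmf" where
  "seq_pmf Ns Nh =
     map_pmf
       (\<lambda>c i. if i < Ns * Nh \<and> i mod Nh = fst (c (i div Nh))
              then (if snd (c (i div Nh)) then 1 else -1) / sqrt (real Ns) else 0)
       (Pi_pmf {..<Ns} (0, True) (\<lambda>_. pmf_of_set ({..<Nh} \<times> (UNIV :: bool set))))"

definition S_pmf :: "nat \<Rightarrow> nat \<Rightarrow> nat \<Rightarrow> real mat pmf" where
  "S_pmf Ns Nh K =
     map_pmf (\<lambda>cols. mat (Ns * Nh) K (\<lambda>(i, k). cols k i))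
       (Pi_pmf {..<K} (\<lambda>_. 0) (\<lambda>_. seq_pmf Ns Nh))"

definition eig_list :: "real mat \<Rightarrow> complex list" where
  "eig_list A = (SOME as. char_poly (map_mat complex_of_real A) = (\<Prod>a\<leftarrow>as. [:- a, 1:])
                          \<and> length as = dim_row A)"

definition eig_moment :: "nat \<Rightarrow> real mat \<Rightarrow> complex" where
  "eig_moment k A = (\<Sum>z\<leftarrow>eig_list A. z ^ k) / of_nat (dim_row A)"

end

theory Submission
  imports Defs "Jordan_Normal_Form.Schur_Decomposition"
begin


definition trc :: "'a::comm_ring_1 mat \<Rightarrow> 'a" where "trc M = (\<Sum>i<dim_row M. M$$(i,i))"

lemma trc_mult_index:
  assumes "X \<in> carrier_mat n m" "Y \<in> carrier_mat m n"
  shows "trc (X*Y) = (\<Sum>i<n. \<Sum>j<m. X$$(i,j) * Y$$(j,i))"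
  using assms unfolding trc_def
  by (auto simp: scalar_prod_def atLeast0LessThan intro!: sum.cong)

lemma trc_comm:
  assumes "X \<in> carrier_mat n m" "Y \<in> carrier_mat m n"
  shows "trc (X*Y) = trc (Y*X)"
  unfolding trc_mult_index[OF assms] trc_mult_index[OF assms(2,1)]
  by (subst sum.swap) (simp add: mult.commute)

lemma eig_list_prop:
  assumes "A \<in> carrier_mat n n"
  shows "char_poly (map_mat complex_of_real A) = (\<Prod>a\<leftarrow>eig_list A. [:- a, 1:]) \<and> length (eig_list A) = n"
proof -
  have C: "map_mat complex_of_real A \<in> carrier_mat n n" using assms by auto
  from char_poly_factorized[OF C] have "\<exists>as. char_poly (map_mat complex_of_real A) = (\<Prod>a\<leftarrow>as. [:- a, 1:])
                          \<and> length as = dim_row A" using assms by auto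
  from someI_ex[OF this] show ?thesis using assms unfolding eig_list_def by auto
qed

lemma eig_sums:
  assumes A: "A \<in> carrier_mat n n"
  shows "(\<Sum>z\<leftarrow>eig_list A. z) = complex_of_real (trc A)"
    "(\<Sum>z\<leftarrow>eig_list A. z^2) = complex_of_real (trc (A*A))"
proof -
  define C where "C = map_mat complex_of_real A"
  define es where "es = eig_list A"
  have C: "C \<in> carrier_mat n n" using A C_def by auto
  have cp: "char_poly C = (\<Prod>a\<leftarrow>es. [:- a, 1:])" and len: "length es = n"
    using eig_list_prop[OF A] unfolding C_def es_def by auto
  obtain B P Q where BPQ: "schur_decomposition C es = (B,P,Q)" by (cases "schur_decomposition C es") auto
  from schur_decomposition[OF C cp BPQ]
  have sim: "similar_mat_wit C B P Q" and ut: "upper_triangular B" and dg: "diag_mat B = es" by auto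
  from sim C have B: "B \<in> carrier_mat n n" and P: "P \<in> carrier_mat n n" and Q: "Q \<in> carrier_mat n n"
    and QP: "Q * P = 1\<^sub>m n" and CB: "C = P * B * Q"
    unfolding similar_mat_wit_def Let_def by auto
  have esi: "\<And>i. i < n \<Longrightarrow> es ! i = B $$ (i,i)" using dg B unfolding diag_mat_def by auto
  have sum_es: "\<And>f :: complex \<Rightarrow> complex. (\<Sum>z\<leftarrow>es. f z) = (\<Sum>i<n. f (B$$(i,i)))"
  proof -
    fix f :: "complex \<Rightarrow> complex"
    have "(\<Sum>z\<leftarrow>es. f z) = (\<Sum>i<length es. f (es ! i))"
      by (simp add: sum_list_sum_nth atLeast0LessThan)
    also have "\<dots> = (\<Sum>i<n. f (B$$(i,i)))" using len esi by auto
    finally show "(\<Sum>z\<leftarrow>es. f z) = (\<Sum>i<n. f (B$$(i,i)))" .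
  qed
  have trB: "\<And>M :: complex mat. M \<in> carrier_mat n n \<Longrightarrow> trc (P * M * Q) = trc M"
  proof -
    fix M :: "complex mat" assume M: "M \<in> carrier_mat n n"
    have "trc (P * M * Q) = trc (Q * (P * M))"
      by (rule trc_comm[of _ n n]) (use P M Q in auto)
    also have "Q * (P * M) = (Q * P) * M" using P M Q by (simp add: assoc_mult_mat)
    also have "\<dots> = M" using QP M by simp
    finally show "trc (P * M * Q) = trc M" .
  qed
  have trC: "trc C = of_real (trc A)"
    unfolding C_def trc_def using A by (simp add: of_real_sum)
  have "trc (C * C) = of_real (trc (A * A))"
    using A unfolding C_def trc_def by (simp add: of_real_sum scalar_prod_def)
  moreover have "C * C = P * (B * B) * Q"
  proof -
    have QPX: "\<And>X. X \<in> carrier_mat n n \<Longrightarrow> Q * (P * X) = X"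
      using P Q QP by (metis assoc_mult_mat left_mult_one_mat)
    have BQ: "B * Q \<in> carrier_mat n n" using B Q by simp
    have "C * C = P * (B * Q) * (P * (B * Q))" unfolding CB using P B Q by (simp add: assoc_mult_mat)
    also have "\<dots> = P * ((B * Q) * (P * (B * Q)))" by (rule assoc_mult_mat[of _ n n _ n _ n]) (use P BQ in auto)
    also have "(B * Q) * (P * (B * Q)) = B * (Q * (P * (B * Q)))" by (rule assoc_mult_mat[of _ n n _ n _ n]) (use B Q P BQ in auto)
    also have "Q * (P * (B * Q)) = B * Q" using QPX[OF BQ] .
    also have "B * (B * Q) = (B * B) * Q" by (rule assoc_mult_mat[symmetric, of _ n n _ n _ n]) (use B Q in auto)
    also have "P * ((B * B) * Q) = P * (B * B) * Q" by (rule assoc_mult_mat[symmetric, of _ n n _ n _ n]) (use P B Q in auto)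
    finally show ?thesis .
  qed
  ultimately have trCC: "trc (B * B) = of_real (trc (A*A))" using trB[of "B*B"] B by auto
  have "(\<Sum>z\<leftarrow>es. z) = trc B" unfolding sum_es trc_def using B by simp
  also have "\<dots> = trc C" using trB[OF B] CB by simp
  finally show "(\<Sum>z\<leftarrow>eig_list A. z) = complex_of_real (trc A)" using trC es_def by simp
  have "trc (B * B) = (\<Sum>i<n. \<Sum>j<n. B$$(i,j) * B$$(j,i))" by (rule trc_mult_index[OF B B])
  also have "\<dots> = (\<Sum>i<n. B$$(i,i)^2)"
  proof (rule sum.cong[OF refl])
    fix i assume i: "i \<in> {..<n}"
    have "(\<Sum>j<n. B$$(i,j) * B$$(j,i)) = (\<Sum>j\<in>{i}. B$$(i,j) * B$$(j,i))"
    proof (rule sum.mono_neutral_right)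
      show "\<forall>j\<in>{..<n} - {i}. B $$ (i, j) * B $$ (j, i) = 0"
        using ut B i unfolding upper_triangular_def by (auto simp: linorder_neq_iff)
    qed (use i in auto)
    then show "(\<Sum>j<n. B$$(i,j) * B$$(j,i)) = B$$(i,i)^2" by (simp add: power2_eq_square)
  qed
  finally show "(\<Sum>z\<leftarrow>eig_list A. z^2) = complex_of_real (trc (A*A))"
    using trCC sum_es[of "\<lambda>z. z^2"] es_def by simp
qed


lemma finite_set_Pi_pmf:
  assumes "finite A" "\<And>x. x \<in> A \<Longrightarrow> finite (set_pmf (p x))"
  shows "finite (set_pmf (Pi_pmf A d p))"
  using assms by (simp add: set_Pi_pmf finite_PiE_dflt)

lemma set_Pi_pmfD:
  assumes "finite A" "f \<in> set_pmf (Pi_pmf A d p)" "x \<in> A"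
  shows "f x \<in> set_pmf (p x)"
  using assms by (auto simp: set_Pi_pmf PiE_dflt_def)

lemma pair_fubini:
  fixes h :: "'a \<times> 'b \<Rightarrow> real"
  assumes P: "finite (set_pmf P)" and Q: "finite (set_pmf Q)"
  shows "(\<integral>x. h x \<partial>pair_pmf P Q) = (\<integral>b. (\<integral>a. h (a,b) \<partial>P) \<partial>Q)"
proof -
  have "(\<integral>x. h x \<partial>pair_pmf P Q) = (\<Sum>x\<in>set_pmf P \<times> set_pmf Q. h x * pmf (pair_pmf P Q) x)"
    by (rule integral_measure_pmf_real) (use P Q in auto)
  also have "\<dots> = (\<Sum>a\<in>set_pmf P. \<Sum>b\<in>set_pmf Q. h (a,b) * (pmf P a * pmf Q b))"
    by (auto simp: sum.cartesian_product pmf_pair intro!: sum.cong)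
  also have "\<dots> = (\<Sum>b\<in>set_pmf Q. (\<Sum>a\<in>set_pmf P. h (a,b) * pmf P a) * pmf Q b)"
    by (subst sum.swap) (simp add: sum_distrib_right mult.assoc)
  also have "\<dots> = (\<Sum>b\<in>set_pmf Q. (\<integral>a. h (a,b) \<partial>P) * pmf Q b)"
    by (intro sum.cong refl, subst integral_measure_pmf_real[of "set_pmf P"]) (use P in auto)
  also have "\<dots> = (\<integral>b. (\<integral>a. h (a,b) \<partial>P) \<partial>Q)"
    by (rule integral_measure_pmf_real[symmetric]) (use Q in auto)
  finally show ?thesis .
qed

lemma integral_const_on_support:
  fixes g :: "'a \<Rightarrow> real"
  assumes "finite (set_pmf Q)" "\<And>b. b \<in> set_pmf Q \<Longrightarrow> g b = c"
  shows "(\<integral>b. g b \<partial>Q) = c"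
proof -
  have "(\<integral>b. g b \<partial>Q) = (\<Sum>b\<in>set_pmf Q. g b * pmf Q b)"
    by (rule integral_measure_pmf_real) (use assms in auto)
  also have "\<dots> = (\<Sum>b\<in>set_pmf Q. c * pmf Q b)" using assms by auto
  also have "\<dots> = c" by (simp add: sum_distrib_left[symmetric] sum_pmf_eq_1 assms)
  finally show ?thesis .
qed

lemma Pi_pmf_cond:
  fixes g :: "('i \<Rightarrow> 'a) \<Rightarrow> real"
  assumes A: "finite A" and l: "l \<in> A" and fin: "\<And>x. x \<in> A \<Longrightarrow> finite (set_pmf (p x))"
    and c: "\<And>f. f \<in> set_pmf (Pi_pmf (A - {l}) d p) \<Longrightarrow> (\<integral>y. g (f(l:=y)) \<partial>p l) = c"
  shows "(\<integral>f. g f \<partial>Pi_pmf A d p) = c"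
proof -
  have Ae: "A = insert l (A - {l})" using l by auto
  have "Pi_pmf A d p = map_pmf (\<lambda>(y,f). f(l:=y)) (pair_pmf (p l) (Pi_pmf (A - {l}) d p))"
    by (subst Ae, rule Pi_pmf_insert) (use A in auto)
  hence "(\<integral>f. g f \<partial>Pi_pmf A d p) = (\<integral>x. g ((snd x)(l := fst x)) \<partial>pair_pmf (p l) (Pi_pmf (A - {l}) d p))"
    by (simp add: case_prod_beta)
  also have "\<dots> = (\<integral>f. (\<integral>y. g (f(l:=y)) \<partial>p l) \<partial>Pi_pmf (A - {l}) d p)"
    using pair_fubini[where h="\<lambda>x. g ((snd x)(l := fst x))" and P="p l" and Q="Pi_pmf (A - {l}) d p"]
    using A l fin by (auto intro!: finite_set_Pi_pmf)
  also have "\<dots> = c"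
    by (rule integral_const_on_support) (use A fin c in \<open>auto intro!: finite_set_Pi_pmf\<close>)
  finally show ?thesis .
qed


definition ip :: "nat \<Rightarrow> (nat \<Rightarrow> real) \<Rightarrow> (nat \<Rightarrow> real) \<Rightarrow> real" where
  "ip n u v = (\<Sum>i<n. u i * v i)"

lemma ip_comm: "ip n u v = ip n v u" unfolding ip_def by (simp add: mult.commute)

lemma sum_blocks: "(\<Sum>i<Ns*Nh. h i) = (\<Sum>m<Ns. \<Sum>p<Nh. h (m*Nh+p :: nat))"
proof -
  have "(\<Sum>i<Ns*Nh. h i) = (\<Sum>m<Ns. sum h {m*Nh..<m*Nh+Nh})" by (rule sum.nat_group[symmetric])
  also have "\<dots> = (\<Sum>m<Ns. \<Sum>p<Nh. h (m*Nh+p))"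
  proof (rule sum.cong[OF refl])
    fix m
    have "{m*Nh..<m*Nh+Nh} = (\<lambda>p. m*Nh+p) ` {..<Nh}"
    proof (intro equalityI subsetI)
      fix x assume "x \<in> {m*Nh..<m*Nh+Nh}"
      hence "x = m*Nh + (x - m*Nh)" "x - m*Nh < Nh" by auto
      thus "x \<in> (\<lambda>p. m*Nh+p) ` {..<Nh}" by blast
    qed auto
    thus "sum h {m*Nh..<m*Nh+Nh} = (\<Sum>p<Nh. h (m*Nh+p))"
      by (simp add: sum.reindex inj_on_def)
  qed
  finally show ?thesis .
qed

definition Ublk :: "nat \<Rightarrow> (nat \<times> bool) pmf" where
  "Ublk Nh = pmf_of_set ({..<Nh} \<times> (UNIV :: bool set))"

definition gblk :: "nat \<Rightarrow> nat \<Rightarrow> nat \<Rightarrow> nat \<times> bool \<Rightarrow> real" where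
  "gblk Ns Nh i c = (if i mod Nh = fst c then (if snd c then 1 else -1) / sqrt (real Ns) else 0)"

lemma seq_pmf_alt: "seq_pmf Ns Nh = map_pmf (\<lambda>c i. if i < Ns * Nh then gblk Ns Nh i (c (i div Nh)) else 0)
       (Pi_pmf {..<Ns} (0, True) (\<lambda>_. Ublk Nh))"
  unfolding seq_pmf_def gblk_def Ublk_def
  by (intro map_pmf_cong refl) (auto simp: fun_eq_iff)

context
  fixes Ns Nh :: nat
  assumes Ns: "Ns \<ge> 1" and Nh: "Nh \<ge> 1"
begin

lemma Nh_ne: "{..<Nh} \<noteq> {}"
proof -
  have "0 \<in> {..<Nh}" using Nh by simp
  thus ?thesis by blast
qed

lemma set_Ublk: "set_pmf (Ublk Nh) = {..<Nh} \<times> UNIV"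
  unfolding Ublk_def using Nh_ne by (subst set_pmf_of_set) auto

lemma blk_idx: assumes "m < Ns" "p < Nh" shows "m*Nh+p < Ns*Nh" "(m*Nh+p) div Nh = m" "(m*Nh+p) mod Nh = p"
proof -
  have "m*Nh+p < m*Nh+Nh" using assms by simp
  also have "\<dots> = (m+1)*Nh" by simp
  also have "\<dots> \<le> Ns*Nh" using assms by (intro mult_right_mono) auto
  finally show "m*Nh+p < Ns*Nh" .
  show "(m*Nh+p) div Nh = m" "(m*Nh+p) mod Nh = p" using assms by auto
qed

lemma finite_Ublk: "finite (set_pmf (Ublk Nh))" by (simp add: set_Ublk)

lemma finite_seq: "finite (set_pmf (seq_pmf Ns Nh))"
  unfolding seq_pmf_alt by (auto intro!: finite_set_Pi_pmf simp: finite_Ublk)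

lemma sum_Ublk: "(\<Sum>c\<in>{..<Nh} \<times> (UNIV::bool set). f c) = (\<Sum>p<Nh. f (p,True) + f (p,False))"
proof -
  have "(\<Sum>c\<in>{..<Nh} \<times> (UNIV::bool set). f c) = (\<Sum>p<Nh. \<Sum>b\<in>UNIV. f (p,b))"
    by (simp add: sum.cartesian_product)
  thus ?thesis by (simp add: UNIV_bool add.commute)
qed

lemma int_Ublk: "(\<integral>c. f c \<partial>Ublk Nh) = (\<Sum>p<Nh. f (p,True) + f (p,False)) / (2 * real Nh)"
  unfolding Ublk_def using Nh_ne
  by (subst integral_pmf_of_set) (auto simp: sum_Ublk card_cartesian_product)

lemma int_g: "(\<integral>c. gblk Ns Nh i c \<partial>Ublk Nh) = 0"
  unfolding int_Ublk gblk_def by (auto intro!: sum.neutral)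

lemma int_g2: "(\<integral>c. (gblk Ns Nh i c)^2 \<partial>Ublk Nh) = 1 / (real Ns * real Nh)"
proof -
  have "(\<Sum>p<Nh. (gblk Ns Nh i (p,True))^2 + (gblk Ns Nh i (p,False))^2) = (\<Sum>p<Nh. if p = i mod Nh then 2 / real Ns else 0)"
    using Ns by (intro sum.cong refl) (auto simp: gblk_def power_divide)
  also have "\<dots> = 2 / real Ns" using Nh by (simp add: sum.delta')
  finally show ?thesis unfolding int_Ublk using Nh by simp
qed

lemma seq_set_ip: assumes u: "u \<in> set_pmf (seq_pmf Ns Nh)" shows "ip (Ns*Nh) u u = 1"
proof -
  from u obtain c where c: "c \<in> set_pmf (Pi_pmf {..<Ns} (0, True) (\<lambda>_. Ublk Nh))"
    and uc: "u = (\<lambda>i. if i < Ns * Nh then gblk Ns Nh i (c (i div Nh)) else 0)"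
    unfolding seq_pmf_alt by auto
  have cm: "\<And>m. m < Ns \<Longrightarrow> fst (c m) < Nh" using set_Pi_pmfD[OF _ c] set_Ublk by fastforce
  have "ip (Ns*Nh) u u = (\<Sum>m<Ns. \<Sum>p<Nh. (gblk Ns Nh (m*Nh+p) (c m))^2)"
    unfolding ip_def sum_blocks uc
  proof (intro sum.cong refl)
    fix m p assume "m \<in> {..<Ns}" "p \<in> {..<Nh}"
    hence "m*Nh+p < Ns*Nh" "(m*Nh+p) div Nh = m" using blk_idx by auto
    thus "(if m * Nh + p < Ns * Nh then gblk Ns Nh (m * Nh + p) (c ((m * Nh + p) div Nh)) else 0) *
         (if m * Nh + p < Ns * Nh then gblk Ns Nh (m * Nh + p) (c ((m * Nh + p) div Nh)) else 0) =
         (gblk Ns Nh (m*Nh+p) (c m))^2" by (simp add: power2_eq_square)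
  qed
  also have "\<dots> = (\<Sum>m<Ns. \<Sum>p<Nh. if p = fst (c m) then 1 / real Ns else 0)"
    using Ns blk_idx by (intro sum.cong refl) (auto simp: gblk_def power_divide)
  also have "\<dots> = (\<Sum>m<Ns. 1 / real Ns)" using cm by (intro sum.cong refl) (simp add: sum.delta')
  also have "\<dots> = 1" using Ns by simp
  finally show ?thesis .
qed

end


context
  fixes Ns Nh :: nat
  assumes Ns: "Ns \<ge> 1" and Nh: "Nh \<ge> 1"
begin

lemma seq_cov:
  assumes i: "i < Ns*Nh" and j: "j < Ns*Nh"
  shows "(\<integral>v. v i * v j \<partial>seq_pmf Ns Nh) = (if i = j then 1 / (real Ns * real Nh) else 0)"
proof -
  let ?P0 = "Pi_pmf {..<Ns} (0, True) (\<lambda>_. Ublk Nh)"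
  let ?g = "gblk Ns Nh"
  have fin: "\<And>x. x \<in> {..<Ns} \<Longrightarrow> finite (set_pmf (Ublk Nh))" using finite_Ublk[OF Ns Nh] by auto
  have eq: "(\<integral>v. v i * v j \<partial>seq_pmf Ns Nh) = (\<integral>c. ?g i (c (i div Nh)) * ?g j (c (j div Nh)) \<partial>?P0)"
    unfolding seq_pmf_alt using i j by simp
  have m: "i div Nh < Ns" "j div Nh < Ns" using i j
    by (simp_all add: less_mult_imp_div_less)
  show ?thesis
  proof (cases "i = j")
    case True
    have "(\<integral>c. ?g i (c (i div Nh)) * ?g j (c (j div Nh)) \<partial>?P0) = 1 / (real Ns * real Nh)"
    proof (rule Pi_pmf_cond[where l="i div Nh"])
      fix f show "(\<integral>y. ?g i ((f(i div Nh := y)) (i div Nh)) * ?g j ((f(i div Nh := y)) (j div Nh)) \<partial>Ublk Nh)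
         = 1 / (real Ns * real Nh)"
        using int_g2[OF Ns Nh, of i] True by (simp add: power2_eq_square)
    qed (use m fin in auto)
    thus ?thesis using eq True by simp
  next
    case False
    show ?thesis
    proof (cases "i div Nh = j div Nh")
      case True
      have "i mod Nh \<noteq> j mod Nh" using False True by (metis div_mult_mod_eq)
      hence "(\<lambda>c. ?g i (c (i div Nh)) * ?g j (c (j div Nh))) = (\<lambda>_. 0)" using True
        unfolding gblk_def by (auto simp: fun_eq_iff)
      thus ?thesis using eq False by simp
    next
      case False2: False
      have "(\<integral>c. ?g i (c (i div Nh)) * ?g j (c (j div Nh)) \<partial>?P0) = 0"
      proof (rule Pi_pmf_cond[where l="i div Nh"])
        fix f show "(\<integral>y. ?g i ((f(i div Nh := y)) (i div Nh)) * ?g j ((f(i div Nh := y)) (j div Nh)) \<partial>Ublk Nh)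
           = 0"
          using int_g[OF Ns Nh, of i] False2 by simp
      qed (use m fin in auto)
      thus ?thesis using eq False by simp
    qed
  qed
qed

lemma seq_ip2:
  assumes u: "u \<in> set_pmf (seq_pmf Ns Nh)"
  shows "(\<integral>v. (ip (Ns*Nh) u v)^2 \<partial>seq_pmf Ns Nh) = 1 / (real Ns * real Nh)"
proof -
  let ?N = "Ns*Nh"
  have "(\<integral>v. (ip ?N u v)^2 \<partial>seq_pmf Ns Nh) = (\<integral>v. (\<Sum>i<?N. \<Sum>j<?N. u i * u j * (v i * v j)) \<partial>seq_pmf Ns Nh)"
    unfolding ip_def power2_eq_square sum_product by (simp add: algebra_simps)
  also have "\<dots> = (\<Sum>i<?N. \<Sum>j<?N. u i * u j * (\<integral>v. v i * v j \<partial>seq_pmf Ns Nh))"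
    using finite_seq[OF Ns Nh] by (simp add: integrable_measure_pmf_finite)
  also have "\<dots> = (\<Sum>i<?N. \<Sum>j<?N. if i = j then u i * u i / (real Ns * real Nh) else 0)"
    by (intro sum.cong refl) (simp add: seq_cov)
  also have "\<dots> = (\<Sum>i<?N. u i * u i) / (real Ns * real Nh)"
    by (simp add: sum_divide_distrib)
  also have "\<dots> = 1 / (real Ns * real Nh)" using seq_set_ip[OF Ns Nh u] unfolding ip_def by simp
  finally show ?thesis .
qed

lemma seq_ip_bound:
  assumes u: "u \<in> set_pmf (seq_pmf Ns Nh)" and v: "v \<in> set_pmf (seq_pmf Ns Nh)"
  shows "(ip (Ns*Nh) u v)^2 \<le> 1"
proof -
  let ?N = "Ns*Nh"
  have "\<bar>ip ?N u v\<bar> \<le> (\<Sum>i<?N. \<bar>u i * v i\<bar>)" unfolding ip_def by (rule sum_abs)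
  also have "\<dots> \<le> (\<Sum>i<?N. (u i * u i + v i * v i) / 2)"
  proof (rule sum_mono)
    fix i
    have "0 \<le> (\<bar>u i\<bar> - \<bar>v i\<bar>)^2" by simp
    thus "\<bar>u i * v i\<bar> \<le> (u i * u i + v i * v i) / 2"
      by (simp add: power2_eq_square abs_mult algebra_simps)
  qed
  also have "\<dots> = 1" using seq_set_ip[OF Ns Nh u] seq_set_ip[OF Ns Nh v]
    unfolding ip_def by (simp add: sum.distrib sum_divide_distrib[symmetric])
  finally have "\<bar>ip ?N u v\<bar> \<le> 1" .
  thus ?thesis using power_mono[of "\<bar>ip ?N u v\<bar>" 1 2] by simp
qed

end


context
  fixes Ns Nh Kn :: nat
  assumes Ns: "Ns \<ge> 1" and Nh: "Nh \<ge> 1"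
begin

lemma sq_aux: fixes x a :: real assumes "0 \<le> x" "x \<le> 1" "0 \<le> a" shows "(x - a)^2 \<le> x + a^2"
proof -
  have "x^2 \<le> x" using assms by (simp add: power2_eq_square mult_left_le)
  moreover have "0 \<le> x * a" using assms by simp
  ultimately show ?thesis by (simp add: power2_diff)
qed

abbreviation "PP \<equiv> Pi_pmf {..<Kn} (\<lambda>_. 0) (\<lambda>_. seq_pmf Ns Nh)"
abbreviation "NN \<equiv> Ns * Nh"

definition XX :: "(nat \<Rightarrow> nat \<Rightarrow> real) \<Rightarrow> nat \<Rightarrow> nat \<Rightarrow> real" where "XX f k l = 0"

lemma finPP: "finite (set_pmf PP)"
  by (rule finite_set_Pi_pmf) (use finite_seq[OF Ns Nh] in auto)

lemma intPP: "integrable (measure_pmf PP) (h :: _ \<Rightarrow> real)"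
  by (rule integrable_measure_pmf_finite[OF finPP])

lemma PP_col: "f \<in> set_pmf PP \<Longrightarrow> k < Kn \<Longrightarrow> f k \<in> set_pmf (seq_pmf Ns Nh)"
  using set_Pi_pmfD[of "{..<Kn}" f] by auto

lemma X_mean:
  assumes "k < Kn" "l < Kn" "k \<noteq> l"
  shows "(\<integral>f. (ip NN (f k) (f l))^2 \<partial>PP) = 1 / real NN"
proof (rule Pi_pmf_cond[where l=l])
  fix f assume f: "f \<in> set_pmf (Pi_pmf ({..<Kn} - {l}) (\<lambda>_. 0) (\<lambda>_. seq_pmf Ns Nh))"
  have "f k \<in> set_pmf (seq_pmf Ns Nh)" using set_Pi_pmfD[OF _ f, of k] assms by auto
  thus "(\<integral>y. (ip NN ((f(l:=y)) k) ((f(l:=y)) l))^2 \<partial>seq_pmf Ns Nh) = 1 / real NN"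
    using seq_ip2[OF Ns Nh] assms by simp
qed (use assms finite_seq[OF Ns Nh] in auto)

lemma X_bound:
  assumes "f \<in> set_pmf PP" "k < Kn" "l < Kn"
  shows "0 \<le> (ip NN (f k) (f l))^2" "(ip NN (f k) (f l))^2 \<le> 1"
  using seq_ip_bound[OF Ns Nh PP_col[OF assms(1,2)] PP_col[OF assms(1,3)]] by auto

lemma Z_diag:
  assumes "k < Kn" "l < Kn" "k \<noteq> l"
  shows "(\<integral>f. ((ip NN (f k) (f l))^2 - 1 / real NN)^2 \<partial>PP) \<le> 2 / real NN"
proof -
  have "1 \<le> NN" using mult_le_mono[OF Ns Nh] by simp
  hence NN: "real NN \<ge> 1" by (metis of_nat_1 of_nat_le_iff)
  have "(\<integral>f. ((ip NN (f k) (f l))^2 - 1 / real NN)^2 \<partial>PP) \<le> (\<integral>f. (ip NN (f k) (f l))^2 + 1 / real NN ^ 2 \<partial>PP)"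
  proof (rule integral_mono_AE[OF intPP intPP])
    show "AE f in measure_pmf PP. ((ip NN (f k) (f l))^2 - 1 / real NN)^2 \<le> (ip NN (f k) (f l))^2 + 1 / real NN ^ 2"
    proof (rule AE_pmfI)
      fix f assume f: "f \<in> set_pmf PP"
      define x where "x = (ip NN (f k) (f l))^2"
      have x: "0 \<le> x" "x \<le> 1" using X_bound[OF f assms(1,2)] x_def by auto
      show "((ip NN (f k) (f l))^2 - 1 / real NN)^2 \<le> (ip NN (f k) (f l))^2 + 1 / real NN ^ 2"
        unfolding x_def[symmetric] using sq_aux[OF x, of "1 / real NN"] by (simp add: power_divide)
    qed
  qed
  also have "\<dots> = 1 / real NN + 1 / real NN ^ 2"
    using X_mean[OF assms] intPP by simp
  also have "\<dots> \<le> 2 / real NN"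
  proof -
    have "1 / real NN ^ 2 \<le> 1 / real NN" using NN by (simp add: power2_eq_square divide_le_cancel) (simp add: field_simps)
    hence "1 / real NN + 1 / real NN ^ 2 \<le> 1 / real NN + 1 / real NN" by (rule add_left_mono)
    also have "\<dots> = 2 / real NN" by simp
    finally show ?thesis .
  qed
  finally show ?thesis .
qed

lemma Z_cross:
  assumes "k < Kn" "l < Kn" "k \<noteq> l" "k' < Kn" "l' < Kn" "k' \<noteq> l'"
    and ne: "\<not> ((k' = k \<and> l' = l) \<or> (k' = l \<and> l' = k))"
  shows "(\<integral>f. ((ip NN (f k) (f l))^2 - 1 / real NN) * ((ip NN (f k') (f l'))^2 - 1 / real NN) \<partial>PP) = 0"
proof -
  obtain j m where jo: "(j = k \<and> m = l) \<or> (j = l \<and> m = k)" and j: "j \<noteq> k'" "j \<noteq> l'"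
    using ne assms by blast
  have jK: "j < Kn" "m < Kn" "j \<noteq> m" using jo assms by auto
  have sw: "\<And>f. (ip NN (f k) (f l))^2 = (ip NN (f j) (f m))^2" using jo ip_comm by metis
  show ?thesis unfolding sw
  proof (rule Pi_pmf_cond[where l=j])
    fix f assume f: "f \<in> set_pmf (Pi_pmf ({..<Kn} - {j}) (\<lambda>_. 0) (\<lambda>_. seq_pmf Ns Nh))"
    have fo: "f m \<in> set_pmf (seq_pmf Ns Nh)" using set_Pi_pmfD[OF _ f, of m] jK by auto
    have "(\<integral>y. ((ip NN ((f(j:=y)) j) ((f(j:=y)) m))^2 - 1 / real NN) * ((ip NN ((f(j:=y)) k') ((f(j:=y)) l'))^2 - 1 / real NN) \<partial>seq_pmf Ns Nh)
       = (\<integral>y. ((ip NN (f m) y)^2 - 1 / real NN) * ((ip NN (f k') (f l'))^2 - 1 / real NN) \<partial>seq_pmf Ns Nh)"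
      using jK j by (simp add: ip_comm)
    also have "\<dots> = (\<integral>y. (ip NN (f m) y)^2 - 1 / real NN \<partial>seq_pmf Ns Nh) * ((ip NN (f k') (f l'))^2 - 1 / real NN)"
      by (rule integral_mult_left_zero)
    also have "(\<integral>y. (ip NN (f m) y)^2 - 1 / real NN \<partial>seq_pmf Ns Nh) = (\<integral>y. (ip NN (f m) y)^2 \<partial>seq_pmf Ns Nh) - 1 / real NN"
      by (subst Bochner_Integration.integral_diff) (auto intro: integrable_measure_pmf_finite[OF finite_seq[OF Ns Nh]])
    also have "\<dots> = 0" using seq_ip2[OF Ns Nh fo] by simp
    also have "0 * ((ip NN (f k') (f l'))^2 - 1 / real NN) = 0" by simp
    finally show "(\<integral>y. ((ip NN ((f(j:=y)) j) ((f(j:=y)) m))^2 - 1 / real NN) * ((ip NN ((f(j:=y)) k') ((f(j:=y)) l'))^2 - 1 / real NN) \<partial>seq_pmf Ns Nh) = 0" .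
  qed (use jK finite_seq[OF Ns Nh] in auto)
qed

end


definition DD :: "nat \<Rightarrow> (nat \<times> nat) set" where "DD Kn = Sigma {..<Kn} (\<lambda>k. {..<Kn} - {k})"

lemma finite_DD: "finite (DD Kn)" unfolding DD_def by auto

lemma card_DD: "card (DD Kn) = Kn * (Kn - 1)"
  unfolding DD_def by (subst card_SigmaI) auto

definition ZZ :: "nat \<Rightarrow> (nat \<Rightarrow> nat \<Rightarrow> real) \<Rightarrow> nat \<times> nat \<Rightarrow> real" where
  "ZZ N f q = (ip N (f (fst q)) (f (snd q)))^2 - 1 / real N"

definition YY :: "nat \<Rightarrow> nat \<Rightarrow> (nat \<Rightarrow> nat \<Rightarrow> real) \<Rightarrow> real" where
  "YY N Kn f = (\<Sum>k<Kn. \<Sum>l<Kn. (ip N (f k) (f l))^2)"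

context
  fixes Ns Nh Kn :: nat
  assumes Ns: "Ns \<ge> 1" and Nh: "Nh \<ge> 1"
begin

lemma ZZ_prod_le:
  assumes q: "q \<in> DD Kn" and q': "q' \<in> DD Kn"
  shows "(\<integral>f. ZZ (Ns*Nh) f q * ZZ (Ns*Nh) f q' \<partial>PP Ns Nh Kn) \<le> (if q' \<in> {q, prod.swap q} then 2 / real (Ns*Nh) else 0)"
proof -
  obtain k l where kl: "q = (k,l)" by (cases q)
  obtain k' l' where kl': "q' = (k',l')" by (cases q')
  have A: "k < Kn" "l < Kn" "k \<noteq> l" "k' < Kn" "l' < Kn" "k' \<noteq> l'" using q q' kl kl' unfolding DD_def by auto
  show ?thesis
  proof (cases "q' \<in> {q, prod.swap q}")
    case True
    hence "\<And>f. ZZ (Ns*Nh) f q' = ZZ (Ns*Nh) f q" unfolding ZZ_def using kl kl' by (auto simp: ip_comm)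
    hence "(\<integral>f. ZZ (Ns*Nh) f q * ZZ (Ns*Nh) f q' \<partial>PP Ns Nh Kn) = (\<integral>f. ((ip (Ns*Nh) (f k) (f l))^2 - 1 / real (Ns*Nh))^2 \<partial>PP Ns Nh Kn)"
      unfolding ZZ_def kl by (simp add: power2_eq_square)
    also have "\<dots> \<le> 2 / real (Ns*Nh)" by (rule Z_diag[OF Ns Nh A(1-3)])
    finally show ?thesis using True by simp
  next
    case False
    hence "\<not> ((k' = k \<and> l' = l) \<or> (k' = l \<and> l' = k))" using kl kl' by auto
    from Z_cross[OF Ns Nh A this] show ?thesis using False unfolding ZZ_def kl kl' by simp
  qed
qed

lemma var_bound: "(\<integral>f. (\<Sum>q\<in>DD Kn. ZZ (Ns*Nh) f q)^2 \<partial>PP Ns Nh Kn) \<le> 4 * real Kn ^ 2 / real (Ns*Nh)"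
proof -
  have "(\<integral>f. (\<Sum>q\<in>DD Kn. ZZ (Ns*Nh) f q)^2 \<partial>PP Ns Nh Kn)
      = (\<integral>f. (\<Sum>q\<in>DD Kn. \<Sum>q'\<in>DD Kn. ZZ (Ns*Nh) f q * ZZ (Ns*Nh) f q') \<partial>PP Ns Nh Kn)"
    by (simp add: power2_eq_square sum_product)
  also have "\<dots> = (\<Sum>q\<in>DD Kn. \<Sum>q'\<in>DD Kn. (\<integral>f. ZZ (Ns*Nh) f q * ZZ (Ns*Nh) f q' \<partial>PP Ns Nh Kn))"
    using intPP[OF Ns Nh] by simp
  also have "\<dots> \<le> (\<Sum>q\<in>DD Kn. \<Sum>q'\<in>DD Kn. (if q' \<in> {q, prod.swap q} then 2 / real (Ns*Nh) else 0))"
    by (intro sum_mono ZZ_prod_le)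
  also have "\<dots> \<le> (\<Sum>q\<in>DD Kn. 4 / real (Ns*Nh))"
  proof (rule sum_mono)
    fix q
    have "(\<Sum>q'\<in>DD Kn. (if q' \<in> {q, prod.swap q} then 2 / real (Ns*Nh) else 0))
        = (\<Sum>q'\<in>{q'\<in>DD Kn. q' \<in> {q, prod.swap q}}. 2 / real (Ns*Nh))"
      by (rule sum.inter_filter[symmetric]) (rule finite_DD)
    also have "\<dots> = real (card {q'\<in>DD Kn. q' \<in> {q, prod.swap q}}) * (2 / real (Ns*Nh))" by simp
    also have "card {q'\<in>DD Kn. q' \<in> {q, prod.swap q}} \<le> card {q, prod.swap q}"
      by (rule card_mono) auto
    also have "card {q, prod.swap q} \<le> 2" by (rule order.trans[OF card_insert_le_m1]) auto
    finally show "(\<Sum>q'\<in>DD Kn. (if q' \<in> {q, prod.swap q} then 2 / real (Ns*Nh) else 0)) \<le> 4 / real (Ns*Nh)"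
      by (simp add: divide_right_mono)
  qed
  also have "\<dots> = real (Kn * (Kn - 1)) * (4 / real (Ns*Nh))" by (simp add: card_DD)
  also have "\<dots> \<le> real Kn ^ 2 * (4 / real (Ns*Nh))"
    by (intro mult_right_mono) (auto simp: power2_eq_square intro!: mult_left_mono)
  finally show ?thesis by (simp add: ac_simps)
qed

lemma YY_eq:
  assumes f: "f \<in> set_pmf (PP Ns Nh Kn)"
  shows "YY (Ns*Nh) Kn f - (real Kn + real (card (DD Kn)) / real (Ns*Nh)) = (\<Sum>q\<in>DD Kn. ZZ (Ns*Nh) f q)"
proof -
  have "YY (Ns*Nh) Kn f = (\<Sum>k<Kn. (ip (Ns*Nh) (f k) (f k))^2 + (\<Sum>l\<in>{..<Kn}-{k}. (ip (Ns*Nh) (f k) (f l))^2))"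
    unfolding YY_def by (intro sum.cong refl sum.remove) auto
  also have "\<dots> = real Kn + (\<Sum>q\<in>DD Kn. (ip (Ns*Nh) (f (fst q)) (f (snd q)))^2)"
    using seq_set_ip[OF Ns Nh PP_col[OF Ns Nh f]] unfolding DD_def
    by (simp add: sum.distrib sum.Sigma case_prod_beta)
  finally show ?thesis unfolding ZZ_def by (simp add: sum_subtractf)
qed

end


lemma mat_traces:
  fixes cols :: "nat \<Rightarrow> nat \<Rightarrow> real" and N Kn :: nat
  defines "S \<equiv> mat N Kn (\<lambda>(i, k). cols k i)"
  shows "trc (S * S\<^sup>T) = (\<Sum>k<Kn. ip N (cols k) (cols k))"
    "trc ((S * S\<^sup>T) * (S * S\<^sup>T)) = (\<Sum>k<Kn. \<Sum>l<Kn. (ip N (cols k) (cols l))^2)"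
proof -
  have S: "S \<in> carrier_mat N Kn" and ST: "S\<^sup>T \<in> carrier_mat Kn N" unfolding S_def by auto
  have Sij: "\<And>i k. i < N \<Longrightarrow> k < Kn \<Longrightarrow> S $$ (i,k) = cols k i" unfolding S_def by simp
  have STij: "\<And>i k. i < N \<Longrightarrow> k < Kn \<Longrightarrow> S\<^sup>T $$ (k,i) = cols k i" unfolding S_def by simp
  have "trc (S * S\<^sup>T) = (\<Sum>i<N. \<Sum>k<Kn. S$$(i,k) * S\<^sup>T$$(k,i))" by (rule trc_mult_index[OF S ST])
  also have "\<dots> = (\<Sum>i<N. \<Sum>k<Kn. cols k i * cols k i)" using Sij STij by (intro sum.cong refl) auto
  also have "\<dots> = (\<Sum>k<Kn. ip N (cols k) (cols k))" unfolding ip_def by (rule sum.swap)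
  finally show "trc (S * S\<^sup>T) = (\<Sum>k<Kn. ip N (cols k) (cols k))" .
  define G where "G = S\<^sup>T * S"
  have G: "G \<in> carrier_mat Kn Kn" unfolding G_def using S ST by simp
  have Gkl: "\<And>k l. k < Kn \<Longrightarrow> l < Kn \<Longrightarrow> G $$ (k,l) = ip N (cols k) (cols l)"
    unfolding G_def ip_def using S ST Sij STij by (simp add: scalar_prod_def atLeast0LessThan)
  have SS: "S * S\<^sup>T \<in> carrier_mat N N" using S ST by simp
  have "(S * S\<^sup>T) * (S * S\<^sup>T) = S * (S\<^sup>T * (S * S\<^sup>T))"
    by (rule assoc_mult_mat[OF S ST SS])
  hence "trc ((S * S\<^sup>T) * (S * S\<^sup>T)) = trc ((S\<^sup>T * (S * S\<^sup>T)) * S)"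
    using trc_comm[OF S, of "S\<^sup>T * (S * S\<^sup>T)"] ST SS by simp
  also have "S\<^sup>T * (S * S\<^sup>T) = (S\<^sup>T * S) * S\<^sup>T" by (rule assoc_mult_mat[symmetric, OF ST S ST])
  also have "(S\<^sup>T * S) * S\<^sup>T * S = (S\<^sup>T * S) * (S\<^sup>T * S)" by (rule assoc_mult_mat[of _ Kn Kn _ N _ Kn]) (use S ST in auto)
  also have "trc ((S\<^sup>T * S) * (S\<^sup>T * S)) = (\<Sum>k<Kn. \<Sum>l<Kn. G$$(k,l) * G$$(l,k))"
    using trc_mult_index[OF G G] unfolding G_def .
  also have "\<dots> = (\<Sum>k<Kn. \<Sum>l<Kn. (ip N (cols k) (cols l))^2)"
  proof (intro sum.cong refl)
    fix k l assume "k \<in> {..<Kn}" "l \<in> {..<Kn}"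
    thus "G$$(k,l) * G$$(l,k) = (ip N (cols k) (cols l))^2"
      using Gkl ip_comm[of N "cols k" "cols l"] by (simp add: power2_eq_square)
  qed
  finally show "trc ((S * S\<^sup>T) * (S * S\<^sup>T)) = (\<Sum>k<Kn. \<Sum>l<Kn. (ip N (cols k) (cols l))^2)" .
qed

lemma eig_moments_cols:
  fixes Ns Nh Kn :: nat
  assumes Ns: "Ns \<ge> 1" and Nh: "Nh \<ge> 1"
    and f: "f \<in> set_pmf (Pi_pmf {..<Kn} (\<lambda>_. 0) (\<lambda>_. seq_pmf Ns Nh))"
  defines "S \<equiv> mat (Ns*Nh) Kn (\<lambda>(i, k). f k i)"
  shows "eig_moment 1 (S * S\<^sup>T) = complex_of_real (real Kn / real (Ns*Nh))"
    "eig_moment 2 (S * S\<^sup>T) = complex_of_real (YY (Ns*Nh) Kn f / real (Ns*Nh))"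
proof -
  have SS: "S * S\<^sup>T \<in> carrier_mat (Ns*Nh) (Ns*Nh)" unfolding S_def by auto
  have dS: "dim_row S = Ns*Nh" unfolding S_def by simp
  have "trc (S * S\<^sup>T) = real Kn"
    unfolding S_def mat_traces using seq_set_ip[OF Ns Nh PP_col[OF Ns Nh f]] by simp
  thus "eig_moment 1 (S * S\<^sup>T) = complex_of_real (real Kn / real (Ns*Nh))"
    unfolding eig_moment_def using eig_sums(1)[OF SS] SS dS by simp
  have "trc ((S * S\<^sup>T) * (S * S\<^sup>T)) = YY (Ns*Nh) Kn f"
    unfolding S_def mat_traces YY_def ..
  thus "eig_moment 2 (S * S\<^sup>T) = complex_of_real (YY (Ns*Nh) Kn f / real (Ns*Nh))"
    unfolding eig_moment_def using eig_sums(2)[OF SS] SS dS by simp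
qed


lemma cheb:
  fixes Ns Nh Kn :: nat and a :: real
  assumes Ns: "Ns \<ge> 1" and Nh: "Nh \<ge> 1" and a: "a > 0"
  shows "measure_pmf.prob (Pi_pmf {..<Kn} (\<lambda>_. 0) (\<lambda>_. seq_pmf Ns Nh))
           {f. a \<le> \<bar>YY (Ns*Nh) Kn f / real (Ns*Nh) - (real Kn + real (card (DD Kn)) / real (Ns*Nh)) / real (Ns*Nh)\<bar>}
         \<le> 4 * real Kn ^ 2 / real (Ns*Nh) / real (Ns*Nh) ^ 2 / a^2"
proof -
  let ?P = "Pi_pmf {..<Kn} (\<lambda>_. 0) (\<lambda>_. seq_pmf Ns Nh)"
  let ?N = "real (Ns*Nh)"
  define g where "g f = YY (Ns*Nh) Kn f / ?N - (real Kn + real (card (DD Kn)) / ?N) / ?N" for f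
  have "measure ?P {x \<in> space ?P. \<bar>g x\<bar> \<ge> a} \<le> (\<integral>x. g x ^ 2 \<partial>?P) / a\<^sup>2"
    by (rule measure_pmf.second_moment_method) (use a intPP[OF Ns Nh] in auto)
  also have "(\<integral>x. g x ^ 2 \<partial>?P) = (\<integral>x. (\<Sum>q\<in>DD Kn. ZZ (Ns*Nh) x q)^2 / ?N^2 \<partial>?P)"
  proof (rule integral_cong_AE)
    show "AE x in measure_pmf ?P. g x ^ 2 = (\<Sum>q\<in>DD Kn. ZZ (Ns*Nh) x q)^2 / ?N^2"
    proof (rule AE_pmfI)
      fix x assume x: "x \<in> set_pmf ?P"
      have "g x = (YY (Ns*Nh) Kn x - (real Kn + real (card (DD Kn)) / ?N)) / ?N"
        unfolding g_def by (simp add: diff_divide_distrib)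
      also have "\<dots> = (\<Sum>q\<in>DD Kn. ZZ (Ns*Nh) x q) / ?N" using YY_eq[OF Ns Nh x] by simp
      finally show "g x ^ 2 = (\<Sum>q\<in>DD Kn. ZZ (Ns*Nh) x q)^2 / ?N^2" by (simp add: power_divide)
    qed
  qed auto
  also have "\<dots> = (\<integral>x. (\<Sum>q\<in>DD Kn. ZZ (Ns*Nh) x q)^2 \<partial>?P) / ?N^2" by simp
  also have "\<dots> \<le> (4 * real Kn ^ 2 / ?N) / ?N^2"
    by (rule divide_right_mono[OF var_bound[OF Ns Nh]]) simp
  finally show ?thesis unfolding g_def by (simp add: divide_right_mono)
qed

lemma transfer_prob:
  assumes "\<And>f. f \<in> set_pmf (Pi_pmf {..<Kn} (\<lambda>_. 0) (\<lambda>_. seq_pmf Ns Nh)) \<Longrightarrow> Q (mat (Ns * Nh) Kn (\<lambda>(i, k). f k i)) \<Longrightarrow> R f"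
  shows "measure_pmf.prob (S_pmf Ns Nh Kn) {S. Q S} \<le> measure_pmf.prob (Pi_pmf {..<Kn} (\<lambda>_. 0) (\<lambda>_. seq_pmf Ns Nh)) {f. R f}"
proof -
  let ?P = "Pi_pmf {..<Kn} (\<lambda>_. 0) (\<lambda>_. seq_pmf Ns Nh)"
  let ?M = "\<lambda>f. mat (Ns * Nh) Kn (\<lambda>(i, k). f k i)"
  have "measure_pmf.prob (S_pmf Ns Nh Kn) {S. Q S} = measure_pmf.prob ?P (?M -` {S. Q S})"
    unfolding S_pmf_def by simp
  also have "\<dots> = measure_pmf.prob ?P (?M -` {S. Q S} \<inter> set_pmf ?P)" by (simp add: measure_Int_set_pmf)
  also have "\<dots> \<le> measure_pmf.prob ?P {f. R f}"
    by (rule measure_pmf.finite_measure_mono) (use assms in auto)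
  finally show ?thesis .
qed

lemma S_pmf_set:
  assumes "S \<in> set_pmf (S_pmf Ns Nh Kn)"
  obtains f where "f \<in> set_pmf (Pi_pmf {..<Kn} (\<lambda>_. 0) (\<lambda>_. seq_pmf Ns Nh))" "S = mat (Ns * Nh) Kn (\<lambda>(i, k). f k i)"
  using assms unfolding S_pmf_def by auto

lemma cont_delta:
  fixes a b \<epsilon> :: real
  assumes "b \<noteq> 0" "\<epsilon> > 0"
  shows "\<exists>\<delta>>0. \<forall>x y. \<bar>x - a\<bar> < \<delta> \<longrightarrow> \<bar>y - b\<bar> < \<delta> \<longrightarrow> \<bar>2 * x^2 / y - 2 * a^2 / b\<bar> < \<epsilon>"
proof -
  let ?f = "\<lambda>z::real\<times>real. 2 * (fst z)^2 / snd z"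
  have "isCont ?f (a,b)" using assms by (intro continuous_intros) auto
  then obtain d where d: "d > 0" "\<And>z. dist z (a,b) < d \<Longrightarrow> dist (?f z) (?f (a,b)) < \<epsilon>"
    unfolding continuous_at_eps_delta using assms by blast
  show ?thesis
  proof (intro exI[of _ "d/2"] conjI allI impI)
    fix x y assume x: "\<bar>x - a\<bar> < d/2" and y: "\<bar>y - b\<bar> < d/2"
    have "dist (x,y) (a,b) \<le> \<bar>dist x a\<bar> + \<bar>dist y b\<bar>"
      unfolding dist_Pair_Pair by (rule sqrt_sum_squares_le_sum_abs)
    also have "\<dots> < d" using x y by (simp add: dist_real_def)
    finally have "dist (?f (x,y)) (?f (a,b)) < \<epsilon>" by (rule d(2))
    thus "\<bar>2 * x^2 / y - 2 * a^2 / b\<bar> < \<epsilon>" by (simp add: dist_real_def)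
  qed (use d in auto)
qed


lemma invN_lim: "(\<lambda>h. 1 / real (Ns * h)) \<longlonglongrightarrow> 0"
proof -
  have "(\<lambda>h. (1 / real Ns) * (1 / real h)) \<longlonglongrightarrow> (1 / real Ns) * 0"
    by (intro tendsto_intros lim_inverse_n')
  thus ?thesis by simp
qed

lemma core:
  fixes Ns :: nat and \<beta> \<delta> :: real and K :: "nat \<Rightarrow> nat"
  assumes Ns: "Ns \<ge> 1"
    and Kpos: "\<And>Nh. Nh \<ge> 1 \<Longrightarrow> K Nh > 0"
    and Klim: "(\<lambda>Nh. real (K Nh) / real (Ns * Nh)) \<longlonglongrightarrow> \<beta>"
    and \<delta>: "\<delta> > 0"
  shows "(\<lambda>Nh. measure_pmf.prob (Pi_pmf {..<K Nh} (\<lambda>_. 0) (\<lambda>_. seq_pmf Ns Nh))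
            {f. \<delta> \<le> \<bar>YY (Ns*Nh) (K Nh) f / real (Ns*Nh) - \<beta> * (1 + \<beta>)\<bar>}) \<longlonglongrightarrow> 0"
proof -
  define r where "r h = real (K h) / real (Ns * h)" for h
  define cN where "cN h = (real (K h) + real (card (DD (K h))) / real (Ns*h)) / real (Ns*h)" for h
  define bnd where "bnd h = 4 * real (K h) ^ 2 / real (Ns*h) / real (Ns*h) ^ 2 / (\<delta>/2)^2" for h
  have rlim: "r \<longlonglongrightarrow> \<beta>" using Klim unfolding r_def .
  have cN_eq: "cN h = r h + r h * r h - r h * (1 / real (Ns*h))" if h: "h \<ge> 1" for h
  proof -
    have K1: "K h \<ge> 1" using Kpos[OF h] by simp
    have N0: "real (Ns*h) > 0" using Ns h by simp
    have c: "real (card (DD (K h))) = real (K h) * real (K h) - real (K h)"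
      using K1 by (simp add: card_DD of_nat_diff algebra_simps)
    have "cN h = (real (K h) + (real (K h) * real (K h) - real (K h)) / real (Ns*h)) / real (Ns*h)"
      unfolding cN_def c ..
    also have "\<dots> = real (K h) / real (Ns*h) + real (K h) * real (K h) / real (Ns*h) / real (Ns*h)
        - real (K h) / real (Ns*h) / real (Ns*h)"
      by (simp add: add_divide_distrib diff_divide_distrib)
    also have "\<dots> = r h + r h * r h - r h * (1 / real (Ns*h))"
      unfolding r_def by simp
    finally show ?thesis .
  qed
  have "(\<lambda>h. r h + r h * r h - r h * (1 / real (Ns*h))) \<longlonglongrightarrow> \<beta> + \<beta> * \<beta> - \<beta> * 0"
    by (intro tendsto_intros rlim invN_lim)
  hence L: "(\<lambda>h. r h + r h * r h - r h * (1 / real (Ns*h))) \<longlonglongrightarrow> \<beta> * (1 + \<beta>)"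
    by (simp add: algebra_simps)
  have cN_lim: "cN \<longlonglongrightarrow> \<beta> * (1 + \<beta>)"
  proof (rule Lim_transform_eventually[OF L])
    show "\<forall>\<^sub>F h in sequentially. r h + r h * r h - r h * (1 / real (Ns*h)) = cN h"
      using eventually_ge_at_top[of 1] by eventually_elim (simp add: cN_eq)
  qed
  have bnd_eq: "bnd h = 16 / \<delta>^2 * (r h)^2 * (1 / real (Ns*h))" if h: "h \<ge> 1" for h
  proof -
    have N0: "real (Ns*h) > 0" using Ns h by simp
    show ?thesis unfolding bnd_def r_def using N0 \<delta> by (simp add: field_simps power2_eq_square)
  qed
  have "(\<lambda>h. 16 / \<delta>^2 * (r h)^2 * (1 / real (Ns*h))) \<longlonglongrightarrow> 16 / \<delta>^2 * \<beta>^2 * 0"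
    by (intro tendsto_intros rlim invN_lim)
  hence L2: "(\<lambda>h. 16 / \<delta>^2 * (r h)^2 * (1 / real (Ns*h))) \<longlonglongrightarrow> 0" by simp
  have bnd_lim: "bnd \<longlonglongrightarrow> 0"
  proof (rule Lim_transform_eventually[OF L2])
    show "\<forall>\<^sub>F h in sequentially. 16 / \<delta>^2 * (r h)^2 * (1 / real (Ns*h)) = bnd h"
      using eventually_ge_at_top[of 1] by eventually_elim (simp add: bnd_eq)
  qed
  have ev: "\<forall>\<^sub>F h in sequentially. dist (cN h) (\<beta> * (1 + \<beta>)) < \<delta>/2"
    using cN_lim \<delta> unfolding tendsto_iff by (metis half_gt_zero)
  show ?thesis
  proof (rule tendsto_sandwich[OF _ _ tendsto_const bnd_lim])
    show "\<forall>\<^sub>F h in sequentially. 0 \<le> measure_pmf.prob (Pi_pmf {..<K h} (\<lambda>_. 0) (\<lambda>_. seq_pmf Ns h))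
            {f. \<delta> \<le> \<bar>YY (Ns*h) (K h) f / real (Ns*h) - \<beta> * (1 + \<beta>)\<bar>}" by simp
    show "\<forall>\<^sub>F h in sequentially. measure_pmf.prob (Pi_pmf {..<K h} (\<lambda>_. 0) (\<lambda>_. seq_pmf Ns h))
            {f. \<delta> \<le> \<bar>YY (Ns*h) (K h) f / real (Ns*h) - \<beta> * (1 + \<beta>)\<bar>} \<le> bnd h"
      using ev eventually_ge_at_top[of 1]
    proof eventually_elim
      case (elim h)
      have "measure_pmf.prob (Pi_pmf {..<K h} (\<lambda>_. 0) (\<lambda>_. seq_pmf Ns h))
            {f. \<delta> \<le> \<bar>YY (Ns*h) (K h) f / real (Ns*h) - \<beta> * (1 + \<beta>)\<bar>}
         \<le> measure_pmf.prob (Pi_pmf {..<K h} (\<lambda>_. 0) (\<lambda>_. seq_pmf Ns h))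
            {f. \<delta>/2 \<le> \<bar>YY (Ns*h) (K h) f / real (Ns*h) - cN h\<bar>}"
      proof (rule measure_pmf.finite_measure_mono)
        have pt: "\<delta>/2 \<le> \<bar>y - cN h\<bar>" if "\<delta> \<le> \<bar>y - \<beta> * (1 + \<beta>)\<bar>" for y
          using elim(1) that unfolding dist_real_def by linarith
        show "{f. \<delta> \<le> \<bar>YY (Ns*h) (K h) f / real (Ns*h) - \<beta> * (1 + \<beta>)\<bar>}
            \<subseteq> {f. \<delta>/2 \<le> \<bar>YY (Ns*h) (K h) f / real (Ns*h) - cN h\<bar>}" using pt by blast
      qed simp
      also have "\<dots> \<le> bnd h" unfolding bnd_def cN_def
        by (rule cheb) (use Ns elim \<delta> in auto)
      finally show ?case .
    qed
  qed
qed

theorem mainTheorem6: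
  fixes Ns :: nat and \<beta> :: real and K :: "nat \<Rightarrow> nat"
  assumes Ns: "Ns \<ge> 1"
    and beta: "\<beta> > 0"
    and Kpos: "\<And>Nh. Nh \<ge> 1 \<Longrightarrow> K Nh > 0"
    and Klim: "(\<lambda>Nh. real (K Nh) / real (Ns * Nh)) \<longlonglongrightarrow> \<beta>"
  shows
    "(\<forall>Nh\<ge>1. \<forall>S\<in>set_pmf (S_pmf Ns Nh (K Nh)).
        eig_moment 1 (S * S\<^sup>T) = complex_of_real (real (K Nh) / real (Ns * Nh)))
     \<and> (\<forall>\<epsilon>>0. (\<lambda>Nh. measure_pmf.prob (S_pmf Ns Nh (K Nh))
            {S. cmod (eig_moment 2 (S * S\<^sup>T) - complex_of_real (\<beta> * (1 + \<beta>))) > \<epsilon>})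
          \<longlonglongrightarrow> 0)
     \<and> (\<forall>Nh\<ge>1. \<forall>S\<in>set_pmf (S_pmf Ns Nh (K Nh)).
        complex_of_real (real (K Nh) / real (Ns * Nh) * ln 2) / eig_moment 1 (S * S\<^sup>T)
          = complex_of_real (ln 2))
     \<and> (\<forall>\<epsilon>>0. (\<lambda>Nh. measure_pmf.prob (S_pmf Ns Nh (K Nh))
            {S. cmod (complex_of_real (\<beta> * ln 2) / eig_moment 1 (S * S\<^sup>T)
                      - complex_of_real (ln 2)) > \<epsilon>})
          \<longlonglongrightarrow> 0)
     \<and> (\<forall>\<epsilon>>0. (\<lambda>Nh. measure_pmf.prob (S_pmf Ns Nh (K Nh))
            {S. cmod (2 * (eig_moment 1 (S * S\<^sup>T))\<^sup>2 / eig_moment 2 (S * S\<^sup>T)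
                      - complex_of_real (2 * \<beta> / (1 + \<beta>))) > \<epsilon>})
          \<longlonglongrightarrow> 0)"
proof -
  define r where "r h = real (K h) / real (Ns * h)" for h
  define PPh where "PPh h = Pi_pmf {..<K h} (\<lambda>_. 0) (\<lambda>_. seq_pmf Ns h)" for h
  define Yh where "Yh h f = YY (Ns*h) (K h) f / real (Ns*h)" for h f
  have rlim: "r \<longlonglongrightarrow> \<beta>" using Klim unfolding r_def .
  have rpos: "r h > 0" if "h \<ge> 1" for h
    using Kpos[OF that] Ns that unfolding r_def by simp
  have em: "eig_moment 1 (S * S\<^sup>T) = complex_of_real (r h)"
      "eig_moment 2 (S * S\<^sup>T) = complex_of_real (Yh h f)"
    if h: "h \<ge> 1" and f: "f \<in> set_pmf (PPh h)" and S: "S = mat (Ns * h) (K h) (\<lambda>(i, k). f k i)" for h f S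
    using eig_moments_cols[OF Ns h f[unfolded PPh_def]] S unfolding r_def Yh_def by auto
  have em1: "eig_moment 1 (S * S\<^sup>T) = complex_of_real (r h)" if h: "h \<ge> 1" and S: "S \<in> set_pmf (S_pmf Ns h (K h))" for h S
    using S by (rule S_pmf_set) (use em(1) h PPh_def in auto)
  have sand: "(\<lambda>h. measure_pmf.prob (S_pmf Ns h (K h)) {S. Q h S}) \<longlonglongrightarrow> 0"
    if lim: "(\<lambda>h. measure_pmf.prob (PPh h) {f. R h f}) \<longlonglongrightarrow> 0"
      and imp: "\<forall>\<^sub>F h in sequentially. \<forall>f \<in> set_pmf (PPh h). Q h (mat (Ns * h) (K h) (\<lambda>(i, k). f k i)) \<longrightarrow> R h f"
    for Q R
  proof (rule tendsto_sandwich[OF _ _ tendsto_const lim])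
    show "\<forall>\<^sub>F h in sequentially. 0 \<le> measure_pmf.prob (S_pmf Ns h (K h)) {S. Q h S}" by simp
    show "\<forall>\<^sub>F h in sequentially. measure_pmf.prob (S_pmf Ns h (K h)) {S. Q h S} \<le> measure_pmf.prob (PPh h) {f. R h f}"
      using imp by eventually_elim (unfold PPh_def, rule transfer_prob, auto)
  qed
  have P1: "\<forall>Nh\<ge>1. \<forall>S\<in>set_pmf (S_pmf Ns Nh (K Nh)).
        eig_moment 1 (S * S\<^sup>T) = complex_of_real (real (K Nh) / real (Ns * Nh))"
    using em1 unfolding r_def by auto
  have P2: "\<forall>\<epsilon>>0. (\<lambda>Nh. measure_pmf.prob (S_pmf Ns Nh (K Nh))
            {S. cmod (eig_moment 2 (S * S\<^sup>T) - complex_of_real (\<beta> * (1 + \<beta>))) > \<epsilon>}) \<longlonglongrightarrow> 0"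
  proof (intro allI impI)
    fix \<epsilon> :: real assume e: "\<epsilon> > 0"
    show "(\<lambda>Nh. measure_pmf.prob (S_pmf Ns Nh (K Nh))
            {S. cmod (eig_moment 2 (S * S\<^sup>T) - complex_of_real (\<beta> * (1 + \<beta>))) > \<epsilon>}) \<longlonglongrightarrow> 0"
    proof (rule sand)
      show "(\<lambda>h. measure_pmf.prob (PPh h) {f. \<epsilon> \<le> \<bar>Yh h f - \<beta> * (1 + \<beta>)\<bar>}) \<longlonglongrightarrow> 0"
        unfolding PPh_def Yh_def by (rule core[OF Ns Kpos Klim e])
      show "\<forall>\<^sub>F h in sequentially. \<forall>f\<in>set_pmf (PPh h).
          cmod (eig_moment 2 (mat (Ns * h) (K h) (\<lambda>(i, k). f k i) * (mat (Ns * h) (K h) (\<lambda>(i, k). f k i))\<^sup>T) - complex_of_real (\<beta> * (1 + \<beta>))) > \<epsilon>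
          \<longrightarrow> \<epsilon> \<le> \<bar>Yh h f - \<beta> * (1 + \<beta>)\<bar>"
        using eventually_ge_at_top[of 1]
      proof eventually_elim
        case (elim h)
        show ?case
        proof (intro ballI impI)
          fix f assume f: "f \<in> set_pmf (PPh h)"
          assume "cmod (eig_moment 2 (mat (Ns * h) (K h) (\<lambda>(i, k). f k i) * (mat (Ns * h) (K h) (\<lambda>(i, k). f k i))\<^sup>T) - complex_of_real (\<beta> * (1 + \<beta>))) > \<epsilon>"
          hence "cmod (complex_of_real (Yh h f - \<beta> * (1 + \<beta>))) > \<epsilon>" using em(2)[OF elim f refl] by simp
          thus "\<epsilon> \<le> \<bar>Yh h f - \<beta> * (1 + \<beta>)\<bar>" by (simp only: norm_of_real)
        qed
      qed
    qed
  qed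
  have P3: "\<forall>Nh\<ge>1. \<forall>S\<in>set_pmf (S_pmf Ns Nh (K Nh)).
        complex_of_real (real (K Nh) / real (Ns * Nh) * ln 2) / eig_moment 1 (S * S\<^sup>T)
          = complex_of_real (ln 2)"
  proof (intro allI impI ballI)
    fix h S assume h: "h \<ge> (1::nat)" and S: "S \<in> set_pmf (S_pmf Ns h (K h))"
    have "r h \<noteq> 0" using rpos[OF h] by simp
    thus "complex_of_real (real (K h) / real (Ns * h) * ln 2) / eig_moment 1 (S * S\<^sup>T) = complex_of_real (ln 2)"
      using em1[OF h S] unfolding r_def by simp
  qed
  have P4: "\<forall>\<epsilon>>0. (\<lambda>Nh. measure_pmf.prob (S_pmf Ns Nh (K Nh))
            {S. cmod (complex_of_real (\<beta> * ln 2) / eig_moment 1 (S * S\<^sup>T)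
                      - complex_of_real (ln 2)) > \<epsilon>}) \<longlonglongrightarrow> 0"
  proof (intro allI impI)
    fix \<epsilon> :: real assume e: "\<epsilon> > 0"
    have "(\<lambda>h. \<beta> * ln 2 / r h) \<longlonglongrightarrow> \<beta> * ln 2 / \<beta>"
      using beta by (intro tendsto_intros rlim) auto
    hence "\<forall>\<^sub>F h in sequentially. dist (\<beta> * ln 2 / r h) (\<beta> * ln 2 / \<beta>) < \<epsilon>"
      using e unfolding tendsto_iff by simp
    hence ev: "\<forall>\<^sub>F h in sequentially. \<bar>\<beta> * ln 2 / r h - ln 2\<bar> < \<epsilon>"
      using beta by (simp add: dist_real_def)
    show "(\<lambda>Nh. measure_pmf.prob (S_pmf Ns Nh (K Nh))
            {S. cmod (complex_of_real (\<beta> * ln 2) / eig_moment 1 (S * S\<^sup>T)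
                      - complex_of_real (ln 2)) > \<epsilon>}) \<longlonglongrightarrow> 0"
    proof (rule sand[where R="\<lambda>_ _. False"])
      show "(\<lambda>h. measure_pmf.prob (PPh h) {f. False}) \<longlonglongrightarrow> 0" by simp
      show "\<forall>\<^sub>F h in sequentially. \<forall>f\<in>set_pmf (PPh h).
          cmod (complex_of_real (\<beta> * ln 2) / eig_moment 1 (mat (Ns * h) (K h) (\<lambda>(i, k). f k i) * (mat (Ns * h) (K h) (\<lambda>(i, k). f k i))\<^sup>T) - complex_of_real (ln 2)) > \<epsilon>
          \<longrightarrow> False"
        using ev eventually_ge_at_top[of 1]
      proof eventually_elim
        case (elim h)
        show ?case
        proof (intro ballI impI)
          fix f assume f: "f \<in> set_pmf (PPh h)"
          assume "cmod (complex_of_real (\<beta> * ln 2) / eig_moment 1 (mat (Ns * h) (K h) (\<lambda>(i, k). f k i) * (mat (Ns * h) (K h) (\<lambda>(i, k). f k i))\<^sup>T) - complex_of_real (ln 2)) > \<epsilon>"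
          hence "cmod (complex_of_real (\<beta> * ln 2 / r h - ln 2)) > \<epsilon>" using em(1)[OF elim(2) f refl] by simp
          hence "\<bar>\<beta> * ln 2 / r h - ln 2\<bar> > \<epsilon>" by (simp only: norm_of_real)
          thus False using elim(1) by simp
        qed
      qed
    qed
  qed
  have P5: "\<forall>\<epsilon>>0. (\<lambda>Nh. measure_pmf.prob (S_pmf Ns Nh (K Nh))
            {S. cmod (2 * (eig_moment 1 (S * S\<^sup>T))\<^sup>2 / eig_moment 2 (S * S\<^sup>T)
                      - complex_of_real (2 * \<beta> / (1 + \<beta>))) > \<epsilon>}) \<longlonglongrightarrow> 0"
  proof (intro allI impI)
    fix \<epsilon> :: real assume e: "\<epsilon> > 0"
    have b0: "\<beta> * (1 + \<beta>) \<noteq> 0" using beta by simp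
    obtain \<delta> where d: "\<delta> > 0" and dd: "\<And>x y. \<bar>x - \<beta>\<bar> < \<delta> \<Longrightarrow> \<bar>y - \<beta> * (1 + \<beta>)\<bar> < \<delta> \<Longrightarrow>
         \<bar>2 * x^2 / y - 2 * \<beta>^2 / (\<beta> * (1 + \<beta>))\<bar> < \<epsilon>"
      using cont_delta[OF b0 e, of \<beta>] by blast
    have tgt: "2 * \<beta>^2 / (\<beta> * (1 + \<beta>)) = 2 * \<beta> / (1 + \<beta>)" using beta by (simp add: power2_eq_square)
    have ev: "\<forall>\<^sub>F h in sequentially. dist (r h) \<beta> < \<delta>"
      using Klim d unfolding tendsto_iff r_def by simp
    show "(\<lambda>Nh. measure_pmf.prob (S_pmf Ns Nh (K Nh))
            {S. cmod (2 * (eig_moment 1 (S * S\<^sup>T))\<^sup>2 / eig_moment 2 (S * S\<^sup>T)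
                      - complex_of_real (2 * \<beta> / (1 + \<beta>))) > \<epsilon>}) \<longlonglongrightarrow> 0"
    proof (rule sand)
      show "(\<lambda>h. measure_pmf.prob (PPh h) {f. \<delta> \<le> \<bar>Yh h f - \<beta> * (1 + \<beta>)\<bar>}) \<longlonglongrightarrow> 0"
        unfolding PPh_def Yh_def by (rule core[OF Ns Kpos Klim d])
      show "\<forall>\<^sub>F h in sequentially. \<forall>f\<in>set_pmf (PPh h).
          cmod (2 * (eig_moment 1 (mat (Ns * h) (K h) (\<lambda>(i, k). f k i) * (mat (Ns * h) (K h) (\<lambda>(i, k). f k i))\<^sup>T))\<^sup>2
             / eig_moment 2 (mat (Ns * h) (K h) (\<lambda>(i, k). f k i) * (mat (Ns * h) (K h) (\<lambda>(i, k). f k i))\<^sup>T)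
             - complex_of_real (2 * \<beta> / (1 + \<beta>))) > \<epsilon>
          \<longrightarrow> \<delta> \<le> \<bar>Yh h f - \<beta> * (1 + \<beta>)\<bar>"
        using ev eventually_ge_at_top[of 1]
      proof eventually_elim
        case (elim h)
        show ?case
        proof (intro ballI impI)
          fix f assume f: "f \<in> set_pmf (PPh h)"
          assume "cmod (2 * (eig_moment 1 (mat (Ns * h) (K h) (\<lambda>(i, k). f k i) * (mat (Ns * h) (K h) (\<lambda>(i, k). f k i))\<^sup>T))\<^sup>2
             / eig_moment 2 (mat (Ns * h) (K h) (\<lambda>(i, k). f k i) * (mat (Ns * h) (K h) (\<lambda>(i, k). f k i))\<^sup>T)
             - complex_of_real (2 * \<beta> / (1 + \<beta>))) > \<epsilon>"
          hence "cmod (complex_of_real (2 * (r h)^2 / Yh h f - 2 * \<beta> / (1 + \<beta>))) > \<epsilon>"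
            using em[OF elim(2) f refl] by simp
          hence gt: "\<bar>2 * (r h)^2 / Yh h f - 2 * \<beta>^2 / (\<beta> * (1 + \<beta>))\<bar> > \<epsilon>" unfolding tgt by (simp only: norm_of_real)
          show "\<delta> \<le> \<bar>Yh h f - \<beta> * (1 + \<beta>)\<bar>"
          proof (rule ccontr)
            assume "\<not> \<delta> \<le> \<bar>Yh h f - \<beta> * (1 + \<beta>)\<bar>"
            hence "\<bar>Yh h f - \<beta> * (1 + \<beta>)\<bar> < \<delta>" by simp
            moreover have "\<bar>r h - \<beta>\<bar> < \<delta>" using elim(1) by (simp add: dist_real_def)
            ultimately show False using dd gt by fastforce
          qed
        qed
      qed
    qed
  qed
  show ?thesis using P1 P2 P3 P4 P5 by blast
qed


end
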